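(* Let $((\mathcal{S},\mathcal{T}),(\mathcal{U},\mathcal{V}))$ be a twin cotorsion pair on a triangulated category $\mathcal{C}$, and put $\mathcal{W}=\mathcal{U}\cap\mathcal{T}$, $\mathcal{C}^+=\mathcal{W}*\mathcal{V}[1]$, $\mathcal{C}^-=\mathcal{S}[-1]*\mathcal{W}$. Then $\mathcal{U}\subseteq\mathcal{C}^-$ and $\mathcal{T}\subseteq\mathcal{C}^+$.
   Context: For full subcategories $\mathcal{X},\mathcal{Y}$, $\mathcal{X}*\mathcal{Y}$ is the full subcategory of objects $C$ admitting a distinguished triangle $X\to C\to Y\to X[1]$ with $X\in\mathcal{X}$, $Y\in\mathcal{Y}$. A cotorsion pair $(\mathcal{A},\mathcal{B})$: full subcategories closed under isomorphisms, finite direct sums and summands with $\mathcal{C}=\mathcal{A}*\mathcal{B}[1]$ and $\mathcal{C}(\mathcal{A},\mathcal{B}[1])=0$. A twin cotorsion pair $((\mathcal{S},\mathcal{T}),(\mathcal{U},\mathcal{V}))$ consists of two cotorsion pairs with $\mathcal{C}(\mathcal{S},\mathcal{V}[1])=0$. *)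

theory Defs
  imports Main
begin

text \<open>A triangulated category, presented concretely: a set of objects, hom-sets,
composition (cmp g f = g after f), identities, abelian group structure on hom-sets,
a shift functor X |-> X[1] (on objects shO, on morphisms shM) which is an additive
autoequivalence, and a class of distinguished triangles X -f-> Y -g-> Z -h-> X[1],
encoded as tuples (X, Y, Z, f, g, h).\<close>

record ('o, 'm) tricat =
  Ob    :: "'o set"
  Hom   :: "'o \<Rightarrow> 'o \<Rightarrow> 'm set"
  cmp   :: "'m \<Rightarrow> 'm \<Rightarrow> 'm"
  idm   :: "'o \<Rightarrow> 'm"
  madd  :: "'m \<Rightarrow> 'm \<Rightarrow> 'm"
  mzero :: "'o \<Rightarrow> 'o \<Rightarrow> 'm"
  mneg  :: "'m \<Rightarrow> 'm"
  shO   :: "'o \<Rightarrow> 'o"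
  shM   :: "'m \<Rightarrow> 'm"
  dtri  :: "('o \<times> 'o \<times> 'o \<times> 'm \<times> 'm \<times> 'm) set"

definition category :: "('o, 'm) tricat \<Rightarrow> bool" where
  "category C \<longleftrightarrow>
     (\<forall>X\<in>Ob C. \<forall>Y\<in>Ob C. \<forall>Z\<in>Ob C. \<forall>f\<in>Hom C X Y. \<forall>g\<in>Hom C Y Z. cmp C g f \<in> Hom C X Z) \<and>
     (\<forall>X\<in>Ob C. idm C X \<in> Hom C X X) \<and>
     (\<forall>X\<in>Ob C. \<forall>Y\<in>Ob C. \<forall>f\<in>Hom C X Y. cmp C f (idm C X) = f \<and> cmp C (idm C Y) f = f) \<and>
     (\<forall>W\<in>Ob C. \<forall>X\<in>Ob C. \<forall>Y\<in>Ob C. \<forall>Z\<in>Ob C.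
        \<forall>f\<in>Hom C W X. \<forall>g\<in>Hom C X Y. \<forall>h\<in>Hom C Y Z.
          cmp C h (cmp C g f) = cmp C (cmp C h g) f)"

definition preadditive :: "('o, 'm) tricat \<Rightarrow> bool" where
  "preadditive C \<longleftrightarrow> category C \<and>
     (\<forall>X\<in>Ob C. \<forall>Y\<in>Ob C.
        mzero C X Y \<in> Hom C X Y \<and>
        (\<forall>f\<in>Hom C X Y. \<forall>g\<in>Hom C X Y. madd C f g \<in> Hom C X Y) \<and>
        (\<forall>f\<in>Hom C X Y. mneg C f \<in> Hom C X Y) \<and>
        (\<forall>f\<in>Hom C X Y. \<forall>g\<in>Hom C X Y. \<forall>h\<in>Hom C X Y.
            madd C (madd C f g) h = madd C f (madd C g h)) \<and>
        (\<forall>f\<in>Hom C X Y. \<forall>g\<in>Hom C X Y. madd C f g = madd C g f) \<and>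
        (\<forall>f\<in>Hom C X Y. madd C (mzero C X Y) f = f) \<and>
        (\<forall>f\<in>Hom C X Y. madd C (mneg C f) f = mzero C X Y)) \<and>
     (\<forall>X\<in>Ob C. \<forall>Y\<in>Ob C. \<forall>Z\<in>Ob C.
        (\<forall>f\<in>Hom C X Y. \<forall>f'\<in>Hom C X Y. \<forall>g\<in>Hom C Y Z.
            cmp C g (madd C f f') = madd C (cmp C g f) (cmp C g f')) \<and>
        (\<forall>f\<in>Hom C X Y. \<forall>g\<in>Hom C Y Z. \<forall>g'\<in>Hom C Y Z.
            cmp C (madd C g g') f = madd C (cmp C g f) (cmp C g' f)))"

definition zero_object :: "('o, 'm) tricat \<Rightarrow> 'o \<Rightarrow> bool" where
  "zero_object C Z \<longleftrightarrow> Z \<in> Ob C \<and>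
     (\<forall>X\<in>Ob C. (\<exists>!f. f \<in> Hom C Z X) \<and> (\<exists>!f. f \<in> Hom C X Z))"

definition is_biprod :: "('o, 'm) tricat \<Rightarrow> 'o \<Rightarrow> 'o \<Rightarrow> 'o \<Rightarrow> bool" where
  "is_biprod C X Y S \<longleftrightarrow> X \<in> Ob C \<and> Y \<in> Ob C \<and> S \<in> Ob C \<and>
     (\<exists>i1\<in>Hom C X S. \<exists>i2\<in>Hom C Y S. \<exists>p1\<in>Hom C S X. \<exists>p2\<in>Hom C S Y.
        cmp C p1 i1 = idm C X \<and> cmp C p2 i2 = idm C Y \<and>
        cmp C p2 i1 = mzero C X Y \<and> cmp C p1 i2 = mzero C Y X \<and>
        madd C (cmp C i1 p1) (cmp C i2 p2) = idm C S)"

definition additive :: "('o, 'm) tricat \<Rightarrow> bool" where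
  "additive C \<longleftrightarrow> preadditive C \<and> (\<exists>Z. zero_object C Z) \<and>
     (\<forall>X\<in>Ob C. \<forall>Y\<in>Ob C. \<exists>S. is_biprod C X Y S)"

definition iso :: "('o, 'm) tricat \<Rightarrow> 'm \<Rightarrow> 'o \<Rightarrow> 'o \<Rightarrow> bool" where
  "iso C f X Y \<longleftrightarrow> f \<in> Hom C X Y \<and>
     (\<exists>g\<in>Hom C Y X. cmp C g f = idm C X \<and> cmp C f g = idm C Y)"

definition iso_obj :: "('o, 'm) tricat \<Rightarrow> 'o \<Rightarrow> 'o \<Rightarrow> bool" where
  "iso_obj C X Y \<longleftrightarrow> (\<exists>f. iso C f X Y)"

definition shift_autoequiv :: "('o, 'm) tricat \<Rightarrow> bool" where
  "shift_autoequiv C \<longleftrightarrow>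
     (\<forall>X\<in>Ob C. shO C X \<in> Ob C) \<and>
     (\<forall>X\<in>Ob C. \<forall>Y\<in>Ob C. \<forall>f\<in>Hom C X Y. shM C f \<in> Hom C (shO C X) (shO C Y)) \<and>
     (\<forall>X\<in>Ob C. shM C (idm C X) = idm C (shO C X)) \<and>
     (\<forall>X\<in>Ob C. \<forall>Y\<in>Ob C. \<forall>Z\<in>Ob C. \<forall>f\<in>Hom C X Y. \<forall>g\<in>Hom C Y Z.
        shM C (cmp C g f) = cmp C (shM C g) (shM C f)) \<and>
     (\<forall>X\<in>Ob C. \<forall>Y\<in>Ob C. \<forall>f\<in>Hom C X Y. \<forall>g\<in>Hom C X Y.
        shM C (madd C f g) = madd C (shM C f) (shM C g)) \<and>
     (\<forall>X\<in>Ob C. \<forall>Y\<in>Ob C. bij_betw (shM C) (Hom C X Y) (Hom C (shO C X) (shO C Y))) \<and>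
     (\<forall>Y\<in>Ob C. \<exists>X\<in>Ob C. iso_obj C Y (shO C X))"

definition is_triangle :: "('o, 'm) tricat \<Rightarrow> 'o \<times> 'o \<times> 'o \<times> 'm \<times> 'm \<times> 'm \<Rightarrow> bool" where
  "is_triangle C t \<longleftrightarrow> (case t of (X, Y, Z, f, g, h) \<Rightarrow>
     X \<in> Ob C \<and> Y \<in> Ob C \<and> Z \<in> Ob C \<and>
     f \<in> Hom C X Y \<and> g \<in> Hom C Y Z \<and> h \<in> Hom C Z (shO C X))"

definition triangulated :: "('o, 'm) tricat \<Rightarrow> bool" where
  "triangulated C \<longleftrightarrow> additive C \<and> shift_autoequiv C \<and>
     (\<forall>t\<in>dtri C. is_triangle C t) \<and>
     \<comment> \<open>TR1: X --id--> X --> 0 --> X[1] is distinguished\<close>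
     (\<forall>X\<in>Ob C. \<forall>Z. zero_object C Z \<longrightarrow>
        (X, X, Z, idm C X, mzero C X Z, mzero C Z (shO C X)) \<in> dtri C) \<and>
     \<comment> \<open>TR1: closure under isomorphisms of triangles\<close>
     (\<forall>X Y Z f g h X' Y' Z' f' g' h' a b c.
        (X, Y, Z, f, g, h) \<in> dtri C \<and> is_triangle C (X', Y', Z', f', g', h') \<and>
        iso C a X X' \<and> iso C b Y Y' \<and> iso C c Z Z' \<and>
        cmp C b f = cmp C f' a \<and> cmp C c g = cmp C g' b \<and>
        cmp C (shM C a) h = cmp C h' c
        \<longrightarrow> (X', Y', Z', f', g', h') \<in> dtri C) \<and>
     \<comment> \<open>TR1: every morphism embeds in a distinguished triangle\<close>
     (\<forall>X\<in>Ob C. \<forall>Y\<in>Ob C. \<forall>f\<in>Hom C X Y. \<exists>Z g h. (X, Y, Z, f, g, h) \<in> dtri C) \<and>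
     \<comment> \<open>TR2: rotation\<close>
     (\<forall>X Y Z f g h. is_triangle C (X, Y, Z, f, g, h) \<longrightarrow>
        ((X, Y, Z, f, g, h) \<in> dtri C \<longleftrightarrow>
         (Y, Z, shO C X, g, h, mneg C (shM C f)) \<in> dtri C)) \<and>
     \<comment> \<open>TR3: completion of morphisms of triangles\<close>
     (\<forall>X Y Z f g h X' Y' Z' f' g' h' a b.
        (X, Y, Z, f, g, h) \<in> dtri C \<and> (X', Y', Z', f', g', h') \<in> dtri C \<and>
        a \<in> Hom C X X' \<and> b \<in> Hom C Y Y' \<and> cmp C b f = cmp C f' a
        \<longrightarrow> (\<exists>c\<in>Hom C Z Z'. cmp C c g = cmp C g' b \<and>
                              cmp C (shM C a) h = cmp C h' c)) \<and>
     \<comment> \<open>TR4: octahedral axiom\<close>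
     (\<forall>X Y Z f g Z' j k X' l i Y' m n.
        (X, Y, Z', f, j, k) \<in> dtri C \<and> (Y, Z, X', g, l, i) \<in> dtri C \<and>
        (X, Z, Y', cmp C g f, m, n) \<in> dtri C
        \<longrightarrow> (\<exists>a\<in>Hom C Z' Y'. \<exists>b\<in>Hom C Y' X'.
              (Z', Y', X', a, b, cmp C (shM C j) i) \<in> dtri C \<and>
              cmp C a j = cmp C m g \<and> cmp C n a = k \<and>
              cmp C b m = l \<and> cmp C i b = cmp C (shM C f) n))"

definition good_subcat :: "('o, 'm) tricat \<Rightarrow> 'o set \<Rightarrow> bool" where
  "good_subcat C A \<longleftrightarrow> A \<subseteq> Ob C \<and>
     (\<forall>X\<in>A. \<forall>Y\<in>Ob C. iso_obj C X Y \<longrightarrow> Y \<in> A) \<and>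
     (\<forall>Z. zero_object C Z \<longrightarrow> Z \<in> A) \<and>
     (\<forall>X\<in>A. \<forall>Y\<in>A. \<forall>S. is_biprod C X Y S \<longrightarrow> S \<in> A) \<and>
     (\<forall>S\<in>A. \<forall>X Y. is_biprod C X Y S \<longrightarrow> X \<in> A)"

definition shift_set :: "('o, 'm) tricat \<Rightarrow> 'o set \<Rightarrow> 'o set" where
  "shift_set C A = {Y \<in> Ob C. \<exists>X\<in>A. iso_obj C Y (shO C X)}"

definition unshift_set :: "('o, 'm) tricat \<Rightarrow> 'o set \<Rightarrow> 'o set" where
  "unshift_set C A = {X \<in> Ob C. shO C X \<in> A}"

definition ext :: "('o, 'm) tricat \<Rightarrow> 'o set \<Rightarrow> 'o set \<Rightarrow> 'o set" where
  "ext C A B = {M \<in> Ob C. \<exists>X Y f g h. X \<in> A \<and> Y \<in> B \<and> (X, M, Y, f, g, h) \<in> dtri C}"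

definition hom_vanish :: "('o, 'm) tricat \<Rightarrow> 'o set \<Rightarrow> 'o set \<Rightarrow> bool" where
  "hom_vanish C A B \<longleftrightarrow> (\<forall>X\<in>A. \<forall>Y\<in>B. \<forall>f\<in>Hom C X Y. f = mzero C X Y)"

definition cotorsion_pair :: "('o, 'm) tricat \<Rightarrow> 'o set \<Rightarrow> 'o set \<Rightarrow> bool" where
  "cotorsion_pair C A B \<longleftrightarrow> good_subcat C A \<and> good_subcat C B \<and>
     Ob C = ext C A (shift_set C B) \<and> hom_vanish C A (shift_set C B)"

definition twin_cotorsion_pair ::
  "('o, 'm) tricat \<Rightarrow> 'o set \<Rightarrow> 'o set \<Rightarrow> 'o set \<Rightarrow> 'o set \<Rightarrow> bool" where
  "twin_cotorsion_pair C S T U V \<longleftrightarrow> cotorsion_pair C S T \<and> cotorsion_pair C U V \<and>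
     hom_vanish C S (shift_set C V)"

end

theory Submission
  imports Defs
begin

context
  fixes C :: "('o, 'm) tricat"
  assumes tri: "triangulated C"
begin

lemma add: "additive C" using tri unfolding triangulated_def by blast
lemma pre: "preadditive C" using add unfolding additive_def by blast
lemma cat: "category C" using pre unfolding preadditive_def by meson
lemma shi: "shift_autoequiv C" using tri unfolding triangulated_def by blast

lemma comp_in[intro]: "X \<in> Ob C \<Longrightarrow> Y \<in> Ob C \<Longrightarrow> Z \<in> Ob C \<Longrightarrow> f \<in> Hom C X Y \<Longrightarrow> g \<in> Hom C Y Z
  \<Longrightarrow> cmp C g f \<in> Hom C X Z" using cat unfolding category_def by meson
lemma id_in[intro,simp]: "X \<in> Ob C \<Longrightarrow> idm C X \<in> Hom C X X" using cat unfolding category_def by meson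
lemma id_r[simp]: "X \<in> Ob C \<Longrightarrow> Y \<in> Ob C \<Longrightarrow> f \<in> Hom C X Y \<Longrightarrow> cmp C f (idm C X) = f"
  using cat unfolding category_def by meson
lemma id_l[simp]: "X \<in> Ob C \<Longrightarrow> Y \<in> Ob C \<Longrightarrow> f \<in> Hom C X Y \<Longrightarrow> cmp C (idm C Y) f = f"
  using cat unfolding category_def by meson
lemma assoc: "W \<in> Ob C \<Longrightarrow> X \<in> Ob C \<Longrightarrow> Y \<in> Ob C \<Longrightarrow> Z \<in> Ob C \<Longrightarrow> f \<in> Hom C W X \<Longrightarrow>
  g \<in> Hom C X Y \<Longrightarrow> h \<in> Hom C Y Z \<Longrightarrow> cmp C h (cmp C g f) = cmp C (cmp C h g) f"
  using cat unfolding category_def by meson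

lemma zero_in[intro,simp]: "X \<in> Ob C \<Longrightarrow> Y \<in> Ob C \<Longrightarrow> mzero C X Y \<in> Hom C X Y"
  using pre unfolding preadditive_def by meson
lemma add_in[intro,simp]: "X \<in> Ob C \<Longrightarrow> Y \<in> Ob C \<Longrightarrow> f \<in> Hom C X Y \<Longrightarrow> g \<in> Hom C X Y \<Longrightarrow> madd C f g \<in> Hom C X Y"
  using pre unfolding preadditive_def by meson
lemma neg_in[intro,simp]: "X \<in> Ob C \<Longrightarrow> Y \<in> Ob C \<Longrightarrow> f \<in> Hom C X Y \<Longrightarrow> mneg C f \<in> Hom C X Y"
  using pre unfolding preadditive_def by meson
lemma add_assoc: "X \<in> Ob C \<Longrightarrow> Y \<in> Ob C \<Longrightarrow> f \<in> Hom C X Y \<Longrightarrow> g \<in> Hom C X Y \<Longrightarrow> h \<in> Hom C X Y \<Longrightarrow>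
  madd C (madd C f g) h = madd C f (madd C g h)"
  using pre unfolding preadditive_def by meson
lemma add_comm: "X \<in> Ob C \<Longrightarrow> Y \<in> Ob C \<Longrightarrow> f \<in> Hom C X Y \<Longrightarrow> g \<in> Hom C X Y \<Longrightarrow> madd C f g = madd C g f"
  using pre unfolding preadditive_def by meson
lemma add_0l[simp]: "X \<in> Ob C \<Longrightarrow> Y \<in> Ob C \<Longrightarrow> f \<in> Hom C X Y \<Longrightarrow> madd C (mzero C X Y) f = f"
  using pre unfolding preadditive_def by meson
lemma add_negl[simp]: "X \<in> Ob C \<Longrightarrow> Y \<in> Ob C \<Longrightarrow> f \<in> Hom C X Y \<Longrightarrow> madd C (mneg C f) f = mzero C X Y"
  using pre unfolding preadditive_def by meson
lemma distl: "X \<in> Ob C \<Longrightarrow> Y \<in> Ob C \<Longrightarrow> Z \<in> Ob C \<Longrightarrow> f \<in> Hom C X Y \<Longrightarrow> f' \<in> Hom C X Y \<Longrightarrow> g \<in> Hom C Y Z \<Longrightarrow>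
  cmp C g (madd C f f') = madd C (cmp C g f) (cmp C g f')"
  using pre unfolding preadditive_def by meson
lemma distr: "X \<in> Ob C \<Longrightarrow> Y \<in> Ob C \<Longrightarrow> Z \<in> Ob C \<Longrightarrow> f \<in> Hom C X Y \<Longrightarrow> g \<in> Hom C Y Z \<Longrightarrow> g' \<in> Hom C Y Z \<Longrightarrow>
  cmp C (madd C g g') f = madd C (cmp C g f) (cmp C g' f)"
  using pre unfolding preadditive_def by meson

lemma add_0r[simp]: "X \<in> Ob C \<Longrightarrow> Y \<in> Ob C \<Longrightarrow> f \<in> Hom C X Y \<Longrightarrow> madd C f (mzero C X Y) = f"
  using add_comm[of X Y f "mzero C X Y"] by simp
lemma add_negr[simp]: "X \<in> Ob C \<Longrightarrow> Y \<in> Ob C \<Longrightarrow> f \<in> Hom C X Y \<Longrightarrow> madd C f (mneg C f) = mzero C X Y"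
  using add_comm[of X Y f "mneg C f"] by simp

lemma inv_unique: assumes "X \<in> Ob C" "Y \<in> Ob C" "a \<in> Hom C X Y" "b \<in> Hom C X Y" "madd C a b = mzero C X Y"
  shows "a = mneg C b"
proof -
  have "a = madd C a (madd C b (mneg C b))" using assms by (simp only: add_negr add_0r)
  also have "\<dots> = madd C (madd C a b) (mneg C b)" using add_assoc[of X Y a b "mneg C b"] assms(1-4) by simp
  also have "\<dots> = mneg C b" using assms by simp
  finally show ?thesis .
qed

lemma idem_zero: assumes "X \<in> Ob C" "Y \<in> Ob C" "a \<in> Hom C X Y" "madd C a a = a"
  shows "a = mzero C X Y"
proof -
  have "mzero C X Y = madd C (mneg C a) a" using assms by simp
  also have "\<dots> = madd C (mneg C a) (madd C a a)" using assms by simp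
  also have "\<dots> = madd C (madd C (mneg C a) a) a" using assms add_assoc[of X Y "mneg C a" a a] by simp
  also have "\<dots> = a" using assms by simp
  finally show ?thesis by simp
qed

lemma neg_neg[simp]: "X \<in> Ob C \<Longrightarrow> Y \<in> Ob C \<Longrightarrow> f \<in> Hom C X Y \<Longrightarrow> mneg C (mneg C f) = f"
  using inv_unique[of X Y f "mneg C f"] by simp

lemma comp_0r[simp]: assumes "X \<in> Ob C" "Y \<in> Ob C" "Z \<in> Ob C" "g \<in> Hom C Y Z"
  shows "cmp C g (mzero C X Y) = mzero C X Z"
proof -
  have "cmp C g (mzero C X Y) = cmp C g (madd C (mzero C X Y) (mzero C X Y))" using assms by simp
  also have "\<dots> = madd C (cmp C g (mzero C X Y)) (cmp C g (mzero C X Y))" using assms distl[of X Y Z "mzero C X Y" "mzero C X Y" g] by simp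
  finally have "cmp C g (mzero C X Y) = madd C (cmp C g (mzero C X Y)) (cmp C g (mzero C X Y))" .
  moreover have "cmp C g (mzero C X Y) \<in> Hom C X Z" using assms by blast
  ultimately show ?thesis using idem_zero[OF assms(1,3)] by metis
qed

lemma comp_0l[simp]: assumes "X \<in> Ob C" "Y \<in> Ob C" "Z \<in> Ob C" "f \<in> Hom C X Y"
  shows "cmp C (mzero C Y Z) f = mzero C X Z"
proof -
  have "cmp C (mzero C Y Z) f = cmp C (madd C (mzero C Y Z) (mzero C Y Z)) f" using assms by simp
  also have "\<dots> = madd C (cmp C (mzero C Y Z) f) (cmp C (mzero C Y Z) f)" using assms distr[of X Y Z f "mzero C Y Z" "mzero C Y Z"] by simp
  finally have "cmp C (mzero C Y Z) f = madd C (cmp C (mzero C Y Z) f) (cmp C (mzero C Y Z) f)" .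
  moreover have "cmp C (mzero C Y Z) f \<in> Hom C X Z" using assms by blast
  ultimately show ?thesis using idem_zero[OF assms(1,3)] by metis
qed

lemma comp_negr: assumes "X \<in> Ob C" "Y \<in> Ob C" "Z \<in> Ob C" "f \<in> Hom C X Y" "g \<in> Hom C Y Z"
  shows "cmp C g (mneg C f) = mneg C (cmp C g f)"
proof -
  have "madd C (cmp C g (mneg C f)) (cmp C g f) = mzero C X Z"
    using assms distl[of X Y Z "mneg C f" f g] by (simp add: neg_in)
  moreover have "cmp C g (mneg C f) \<in> Hom C X Z" using assms by blast
  ultimately show ?thesis using assms inv_unique[of X Z] by blast
qed

lemma comp_negl: assumes "X \<in> Ob C" "Y \<in> Ob C" "Z \<in> Ob C" "f \<in> Hom C X Y" "g \<in> Hom C Y Z"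
  shows "cmp C (mneg C g) f = mneg C (cmp C g f)"
proof -
  have "madd C (cmp C (mneg C g) f) (cmp C g f) = mzero C X Z"
    using assms distr[of X Y Z f "mneg C g" g] by (simp add: neg_in)
  moreover have "cmp C (mneg C g) f \<in> Hom C X Z" using assms by blast
  ultimately show ?thesis using assms inv_unique[of X Z] by blast
qed

lemma neg_0[simp]: "X \<in> Ob C \<Longrightarrow> Y \<in> Ob C \<Longrightarrow> mneg C (mzero C X Y) = mzero C X Y"
  using inv_unique[of X Y "mzero C X Y" "mzero C X Y"] by simp

lemma neg_cancel: "X \<in> Ob C \<Longrightarrow> Y \<in> Ob C \<Longrightarrow> f \<in> Hom C X Y \<Longrightarrow> g \<in> Hom C X Y \<Longrightarrow>
   mneg C f = mneg C g \<Longrightarrow> f = g"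
  by (metis neg_neg)

lemma shO_in[simp,intro]: "X \<in> Ob C \<Longrightarrow> shO C X \<in> Ob C"
  using shi unfolding shift_autoequiv_def by meson
lemma shM_in[intro]: "X \<in> Ob C \<Longrightarrow> Y \<in> Ob C \<Longrightarrow> f \<in> Hom C X Y \<Longrightarrow> shM C f \<in> Hom C (shO C X) (shO C Y)"
  using shi unfolding shift_autoequiv_def by meson
lemma shM_id[simp]: "X \<in> Ob C \<Longrightarrow> shM C (idm C X) = idm C (shO C X)"
  using shi unfolding shift_autoequiv_def by meson
lemma shM_comp: "X \<in> Ob C \<Longrightarrow> Y \<in> Ob C \<Longrightarrow> Z \<in> Ob C \<Longrightarrow> f \<in> Hom C X Y \<Longrightarrow> g \<in> Hom C Y Z \<Longrightarrow>
   shM C (cmp C g f) = cmp C (shM C g) (shM C f)"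
  using shi unfolding shift_autoequiv_def by meson
lemma shM_add: "X \<in> Ob C \<Longrightarrow> Y \<in> Ob C \<Longrightarrow> f \<in> Hom C X Y \<Longrightarrow> g \<in> Hom C X Y \<Longrightarrow>
   shM C (madd C f g) = madd C (shM C f) (shM C g)"
  using shi unfolding shift_autoequiv_def by meson
lemma shM_bij: "X \<in> Ob C \<Longrightarrow> Y \<in> Ob C \<Longrightarrow> bij_betw (shM C) (Hom C X Y) (Hom C (shO C X) (shO C Y))"
  using shi unfolding shift_autoequiv_def by meson
lemma ess_surj: "Y \<in> Ob C \<Longrightarrow> \<exists>X\<in>Ob C. iso_obj C Y (shO C X)"
  using shi unfolding shift_autoequiv_def by meson

lemma shM_inj: "X \<in> Ob C \<Longrightarrow> Y \<in> Ob C \<Longrightarrow> f \<in> Hom C X Y \<Longrightarrow> g \<in> Hom C X Y \<Longrightarrow>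
   shM C f = shM C g \<Longrightarrow> f = g"
  using shM_bij[of X Y] unfolding bij_betw_def inj_on_def by blast
lemma shM_surj: "X \<in> Ob C \<Longrightarrow> Y \<in> Ob C \<Longrightarrow> h \<in> Hom C (shO C X) (shO C Y) \<Longrightarrow>
   \<exists>f\<in>Hom C X Y. h = shM C f"
  using shM_bij[of X Y] unfolding bij_betw_def by blast

lemma shM_zero[simp]: assumes "X \<in> Ob C" "Y \<in> Ob C"
  shows "shM C (mzero C X Y) = mzero C (shO C X) (shO C Y)"
proof -
  have "shM C (mzero C X Y) = shM C (madd C (mzero C X Y) (mzero C X Y))" using assms by simp
  also have "\<dots> = madd C (shM C (mzero C X Y)) (shM C (mzero C X Y))"
    using assms shM_add[of X Y "mzero C X Y" "mzero C X Y"] by simp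
  finally have "shM C (mzero C X Y) = madd C (shM C (mzero C X Y)) (shM C (mzero C X Y))" .
  moreover have "shM C (mzero C X Y) \<in> Hom C (shO C X) (shO C Y)" using assms by blast
  ultimately show ?thesis using idem_zero[of "shO C X" "shO C Y"] assms by (metis shO_in)
qed

lemma shM_neg: assumes "X \<in> Ob C" "Y \<in> Ob C" "f \<in> Hom C X Y"
  shows "shM C (mneg C f) = mneg C (shM C f)"
proof -
  have "madd C (shM C (mneg C f)) (shM C f) = shM C (madd C (mneg C f) f)"
    using assms shM_add[of X Y "mneg C f" f] by simp
  also have "\<dots> = mzero C (shO C X) (shO C Y)" using assms by simp
  finally have "madd C (shM C (mneg C f)) (shM C f) = mzero C (shO C X) (shO C Y)" .
  moreover have "shM C (mneg C f) \<in> Hom C (shO C X) (shO C Y)" using assms by blast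
  moreover have "shM C f \<in> Hom C (shO C X) (shO C Y)" using assms by blast
  ultimately show ?thesis using inv_unique[of "shO C X" "shO C Y"] assms by (metis shO_in)
qed

lemma zo_ex: "\<exists>Z. zero_object C Z" using add unfolding additive_def by blast
lemma zo_in: "zero_object C Z \<Longrightarrow> Z \<in> Ob C" unfolding zero_object_def by blast
lemma zo_to: "zero_object C Z \<Longrightarrow> X \<in> Ob C \<Longrightarrow> f \<in> Hom C Z X \<Longrightarrow> f = mzero C Z X"
  unfolding zero_object_def by (metis zero_in)
lemma zo_from: "zero_object C Z \<Longrightarrow> X \<in> Ob C \<Longrightarrow> f \<in> Hom C X Z \<Longrightarrow> f = mzero C X Z"
  unfolding zero_object_def by (metis zero_in)

lemma dtri_tri: "t \<in> dtri C \<Longrightarrow> is_triangle C t"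
proof -
  have "\<forall>t\<in>dtri C. is_triangle C t" using tri unfolding triangulated_def by meson
  thus "t \<in> dtri C \<Longrightarrow> is_triangle C t" by blast
qed

lemma dtriD: assumes "(X, Y, Z, f, g, h) \<in> dtri C"
  shows "X \<in> Ob C" "Y \<in> Ob C" "Z \<in> Ob C" "f \<in> Hom C X Y" "g \<in> Hom C Y Z" "h \<in> Hom C Z (shO C X)"
proof -
  have "is_triangle C (X, Y, Z, f, g, h)" using assms by (rule dtri_tri)
  thus "X \<in> Ob C" "Y \<in> Ob C" "Z \<in> Ob C" "f \<in> Hom C X Y" "g \<in> Hom C Y Z" "h \<in> Hom C Z (shO C X)"
    unfolding is_triangle_def by auto
qed

lemma TR1: "X \<in> Ob C \<Longrightarrow> zero_object C Z \<Longrightarrow>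
   (X, X, Z, idm C X, mzero C X Z, mzero C Z (shO C X)) \<in> dtri C"
  using tri unfolding triangulated_def by meson

lemma TR1iso: "(X, Y, Z, f, g, h) \<in> dtri C \<Longrightarrow> is_triangle C (X', Y', Z', f', g', h') \<Longrightarrow>
        iso C a X X' \<Longrightarrow> iso C b Y Y' \<Longrightarrow> iso C c Z Z' \<Longrightarrow>
        cmp C b f = cmp C f' a \<Longrightarrow> cmp C c g = cmp C g' b \<Longrightarrow>
        cmp C (shM C a) h = cmp C h' c
        \<Longrightarrow> (X', Y', Z', f', g', h') \<in> dtri C"
  using tri unfolding triangulated_def by meson

lemma TR1c: "X \<in> Ob C \<Longrightarrow> Y \<in> Ob C \<Longrightarrow> f \<in> Hom C X Y \<Longrightarrow> \<exists>Z g h. (X, Y, Z, f, g, h) \<in> dtri C"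
  using tri unfolding triangulated_def by meson

lemma TR2: "is_triangle C (X, Y, Z, f, g, h) \<Longrightarrow>
        ((X, Y, Z, f, g, h) \<in> dtri C \<longleftrightarrow> (Y, Z, shO C X, g, h, mneg C (shM C f)) \<in> dtri C)"
  using tri unfolding triangulated_def by meson

lemma rot: "(X, Y, Z, f, g, h) \<in> dtri C \<Longrightarrow> (Y, Z, shO C X, g, h, mneg C (shM C f)) \<in> dtri C"
  using TR2 dtri_tri by blast

lemma TR3: "(X, Y, Z, f, g, h) \<in> dtri C \<Longrightarrow> (X', Y', Z', f', g', h') \<in> dtri C \<Longrightarrow>
        a \<in> Hom C X X' \<Longrightarrow> b \<in> Hom C Y Y' \<Longrightarrow> cmp C b f = cmp C f' a
        \<Longrightarrow> (\<exists>c\<in>Hom C Z Z'. cmp C c g = cmp C g' b \<and> cmp C (shM C a) h = cmp C h' c)"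
  using tri unfolding triangulated_def by meson

lemma E0: assumes tr: "(X, Y, Z, f, g, h) \<in> dtri C" shows "cmp C g f = mzero C X Z"
proof -
  obtain Z0 where z: "zero_object C Z0" using zo_ex by blast
  note d = dtriD[OF tr]
  have Z0: "Z0 \<in> Ob C" using z zo_in by blast
  have T0: "(X, X, Z0, idm C X, mzero C X Z0, mzero C Z0 (shO C X)) \<in> dtri C" using TR1 d(1) z by blast
  have "cmp C f (idm C X) = cmp C f (idm C X)" ..
  from TR3[OF T0 tr id_in[OF d(1)] d(4) this] obtain c where
    c: "c \<in> Hom C Z0 Z" "cmp C c (mzero C X Z0) = cmp C g f" by blast
  show ?thesis using c d Z0 comp_0r[of X Z0 Z c] by simp
qed

lemma Ecov: assumes tr: "(X, Y, Z, f, g, h) \<in> dtri C" and W: "W \<in> Ob C" and t: "t \<in> Hom C W Y"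
  and gt: "cmp C g t = mzero C W Z"
  shows "\<exists>s\<in>Hom C W X. t = cmp C f s"
proof -
  obtain Z0 where z: "zero_object C Z0" using zo_ex by blast
  note d = dtriD[OF tr]
  have Z0: "Z0 \<in> Ob C" using z zo_in by blast
  have A: "(W, Z0, shO C W, mzero C W Z0, mzero C Z0 (shO C W), mneg C (shM C (idm C W))) \<in> dtri C"
    using rot[OF TR1[OF W z]] .
  have B: "(Y, Z, shO C X, g, h, mneg C (shM C f)) \<in> dtri C" using rot[OF tr] .
  have b: "mzero C Z0 Z \<in> Hom C Z0 Z" using Z0 d by simp
  have eq: "cmp C (mzero C Z0 Z) (mzero C W Z0) = cmp C g t" using gt W Z0 d by simp
  from TR3[OF A B t b eq] obtain c where c: "c \<in> Hom C (shO C W) (shO C X)"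
    "cmp C (shM C t) (mneg C (shM C (idm C W))) = cmp C (mneg C (shM C f)) c" by blast
  obtain s where s: "s \<in> Hom C W X" "c = shM C s" using shM_surj[OF W d(1) c(1)] by blast
  have st: "shM C t \<in> Hom C (shO C W) (shO C Y)" using W d t by blast
  have sf: "shM C f \<in> Hom C (shO C X) (shO C Y)" using d by blast
  have 1: "cmp C (shM C t) (mneg C (shM C (idm C W))) = mneg C (shM C t)"
    using comp_negr[of "shO C W" "shO C W" "shO C Y" "idm C (shO C W)" "shM C t"] id_r[of "shO C W" "shO C Y" "shM C t"] W d st by simp
  have 2: "cmp C (mneg C (shM C f)) c = mneg C (shM C (cmp C f s))"
    using comp_negl[of "shO C W" "shO C X" "shO C Y" c "shM C f"] shM_comp[of W X Y s f] W d s c sf by simp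
  have "shM C t = shM C (cmp C f s)"
    using neg_cancel[of "shO C W" "shO C Y" "shM C t" "shM C (cmp C f s)"] 1 2 c(2) st W d s
    by (metis comp_in shM_in shO_in)
  hence "t = cmp C f s" using shM_inj[of W Y t "cmp C f s"] W d s t by blast
  thus ?thesis using s by blast
qed

lemma Econtra: assumes tr: "(X, Y, Z, f, g, h) \<in> dtri C" and D: "D \<in> Ob C" and dd: "d \<in> Hom C Y D"
  and df: "cmp C d f = mzero C X D"
  shows "\<exists>e\<in>Hom C Z D. d = cmp C e g"
proof -
  obtain Z0 where z: "zero_object C Z0" using zo_ex by blast
  note dt = dtriD[OF tr]
  have Z0: "Z0 \<in> Ob C" using z zo_in by blast
  obtain D' where D': "D' \<in> Ob C" "iso_obj C D (shO C D')" using ess_surj[OF D] by blast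
  then obtain \<phi> \<psi> where ph: "\<phi> \<in> Hom C D (shO C D')" "\<psi> \<in> Hom C (shO C D') D"
    "cmp C \<psi> \<phi> = idm C D" "cmp C \<phi> \<psi> = idm C (shO C D')"
    unfolding iso_obj_def iso_def by blast
  have R: "(Z0, shO C D', shO C D', mzero C Z0 (shO C D'), mneg C (shM C (idm C D')),
      mneg C (shM C (mzero C D' Z0))) \<in> dtri C"
    using rot[OF rot[OF TR1[OF D'(1) z]]] .
  have a: "mzero C X Z0 \<in> Hom C X Z0" using dt Z0 by simp
  have b: "cmp C \<phi> d \<in> Hom C Y (shO C D')" using ph dd dt D D' by blast
  have "cmp C (cmp C \<phi> d) f = cmp C \<phi> (cmp C d f)" using assoc[of X Y D "shO C D'" f d \<phi>] dt D D' ph dd by simp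
  also have "\<dots> = mzero C X (shO C D')" using df dt D D' ph by simp
  also have "\<dots> = cmp C (mzero C Z0 (shO C D')) (mzero C X Z0)" using dt D' Z0 by simp
  finally have eq: "cmp C (cmp C \<phi> d) f = cmp C (mzero C Z0 (shO C D')) (mzero C X Z0)" .
  from TR3[OF tr R a b eq] obtain c where c: "c \<in> Hom C Z (shO C D')"
    "cmp C c g = cmp C (mneg C (shM C (idm C D'))) (cmp C \<phi> d)" by blast
  have cg: "cmp C c g = mneg C (cmp C \<phi> d)"
    using c(2) comp_negl[of Y "shO C D'" "shO C D'" "cmp C \<phi> d" "idm C (shO C D')"] b dt D' by simp
  define e where "e = cmp C \<psi> (mneg C c)"
  have e: "e \<in> Hom C Z D" unfolding e_def using c ph dt D D' by (meson comp_in neg_in shO_in)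
  have "cmp C e g = cmp C \<psi> (cmp C (mneg C c) g)"
    unfolding e_def using assoc[of Y Z "shO C D'" D g "mneg C c" \<psi>] dt D D' ph c by simp
  also have "\<dots> = cmp C \<psi> (cmp C \<phi> d)"
    using comp_negl[of Y Z "shO C D'" g c] cg dt D' c b neg_neg[of Y "shO C D'" "cmp C \<phi> d"] by simp
  also have "\<dots> = d" using assoc[of Y D "shO C D'" D d \<phi> \<psi>] ph dd dt D D' by simp
  finally show ?thesis using e by metis
qed

lemma epi_of_tri: assumes tr: "(X, Y, Z, b, p, w) \<in> dtri C" and w0: "w = mzero C Z (shO C X)"
  and D: "D \<in> Ob C" and t: "t \<in> Hom C Z D" and tp: "cmp C t p = mzero C Y D"
  shows "t = mzero C Z D"
proof -
  note dt = dtriD[OF tr]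
  obtain e where e: "e \<in> Hom C (shO C X) D" "t = cmp C e w" using Econtra[OF rot[OF tr] D t tp] by blast
  thus ?thesis using w0 comp_0r[of Z "shO C X" D e] dt D by simp
qed

lemma retract: assumes X: "X \<in> Ob C" and Y: "Y \<in> Ob C" and b: "b \<in> Hom C X Y" and r: "r \<in> Hom C Y X"
  and rb: "cmp C r b = idm C X"
  shows "\<exists>Z. is_biprod C X Z Y"
proof -
  obtain Z p w where tr: "(X, Y, Z, b, p, w) \<in> dtri C" using TR1c[OF X Y b] by blast
  note dt = dtriD[OF tr]
  have sb: "shM C b \<in> Hom C (shO C X) (shO C Y)" using X Y b by blast
  have sr: "shM C r \<in> Hom C (shO C Y) (shO C X)" using X Y r by blast
  have "cmp C (mneg C (shM C b)) w = mzero C Z (shO C Y)" using E0[OF rot[OF rot[OF tr]]] .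
  hence "mneg C (cmp C (shM C b) w) = mzero C Z (shO C Y)"
    using comp_negl[of Z "shO C X" "shO C Y" w "shM C b"] dt sb X Y by simp
  hence bw: "cmp C (shM C b) w = mzero C Z (shO C Y)"
    using neg_neg[of Z "shO C Y" "cmp C (shM C b) w"] dt sb X Y comp_in[of Z "shO C X" "shO C Y" w "shM C b"] by simp
  have "w = cmp C (idm C (shO C X)) w" using dt X by simp
  also have "\<dots> = cmp C (shM C (cmp C r b)) w" using rb X by simp
  also have "\<dots> = cmp C (cmp C (shM C r) (shM C b)) w" using shM_comp[OF X Y X b r] by simp
  also have "\<dots> = cmp C (shM C r) (cmp C (shM C b) w)"
    using assoc[of Z "shO C X" "shO C Y" "shO C X" w "shM C b" "shM C r"] dt sb sr X Y by simp
  also have "\<dots> = mzero C Z (shO C X)" using bw comp_0r[of Z "shO C Y" "shO C X" "shM C r"] dt sr X Y by simp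
  finally have w0: "w = mzero C Z (shO C X)" .
  have br: "cmp C b r \<in> Hom C Y Y" using b r X Y by blast
  define e where "e = madd C (idm C Y) (mneg C (cmp C b r))"
  have e: "e \<in> Hom C Y Y" unfolding e_def using br Y by simp
  have "cmp C e b = madd C (cmp C (idm C Y) b) (cmp C (mneg C (cmp C b r)) b)"
    unfolding e_def using distr[of X Y Y b "idm C Y" "mneg C (cmp C b r)"] X Y b br by simp
  also have "\<dots> = madd C b (mneg C (cmp C (cmp C b r) b))"
    using comp_negl[of X Y Y b "cmp C b r"] X Y b br by simp
  also have "cmp C (cmp C b r) b = b"
    using assoc[of X Y X Y b r b] rb X Y b r by simp
  finally have eb: "cmp C e b = mzero C X Y" using X Y b by simp
  obtain i2 where i2: "i2 \<in> Hom C Z Y" "e = cmp C i2 p" using Econtra[OF tr Y e eb] by blast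
  have pb: "cmp C p b = mzero C X Z" using E0[OF tr] .
  have "cmp C (cmp C r i2) p = cmp C r e" using assoc[of Y Z Y X p i2 r] i2 dt r by simp
  also have "\<dots> = madd C (cmp C r (idm C Y)) (cmp C r (mneg C (cmp C b r)))"
    unfolding e_def using distl[of Y Y X "idm C Y" "mneg C (cmp C b r)" r] Y X r br by simp
  also have "\<dots> = madd C r (mneg C (cmp C r (cmp C b r)))"
    using comp_negr[of Y Y X "cmp C b r" r] Y X r br by simp
  also have "cmp C r (cmp C b r) = r"
    using assoc[of Y X Y X r b r] rb X Y b r by simp
  finally have "cmp C (cmp C r i2) p = mzero C Y X" using X Y r by simp
  hence ri2: "cmp C r i2 = mzero C Z X"
    using epi_of_tri[OF tr w0 X, of "cmp C r i2"] i2 r dt by blast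
  have pi2: "cmp C p i2 \<in> Hom C Z Z" using i2 dt by blast
  have "cmp C (cmp C p i2) p = cmp C p e" using assoc[of Y Z Y Z p i2 p] i2 dt by simp
  also have "\<dots> = madd C (cmp C p (idm C Y)) (cmp C p (mneg C (cmp C b r)))"
    unfolding e_def using distl[of Y Y Z "idm C Y" "mneg C (cmp C b r)" p] Y dt br by simp
  also have "\<dots> = madd C p (mneg C (cmp C p (cmp C b r)))"
    using comp_negr[of Y Y Z "cmp C b r" p] Y dt br by simp
  also have "cmp C p (cmp C b r) = mzero C Y Z"
    using assoc[of Y X Y Z r b p] pb comp_0l[of Y X Z r] X Y b r dt by simp
  finally have ppp: "cmp C (cmp C p i2) p = p" using Y dt by simp
  have "cmp C (madd C (cmp C p i2) (mneg C (idm C Z))) p = madd C (cmp C (cmp C p i2) p) (cmp C (mneg C (idm C Z)) p)"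
    using distr[of Y Z Z p "cmp C p i2" "mneg C (idm C Z)"] pi2 dt by simp
  also have "\<dots> = madd C p (mneg C p)" using ppp comp_negl[of Y Z Z p "idm C Z"] dt by simp
  finally have "cmp C (madd C (cmp C p i2) (mneg C (idm C Z))) p = mzero C Y Z" using dt by simp
  hence "madd C (cmp C p i2) (mneg C (idm C Z)) = mzero C Z Z"
    using epi_of_tri[OF tr w0, of Z "madd C (cmp C p i2) (mneg C (idm C Z))"] pi2 dt by simp
  hence "cmp C p i2 = mneg C (mneg C (idm C Z))"
    using inv_unique[of Z Z "cmp C p i2" "mneg C (idm C Z)"] pi2 dt by simp
  hence pi2id: "cmp C p i2 = idm C Z" using neg_neg[of Z Z "idm C Z"] dt by simp
  have "madd C (cmp C b r) (cmp C i2 p) = madd C (cmp C b r) (madd C (idm C Y) (mneg C (cmp C b r)))"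
    using i2 e_def by simp
  also have "\<dots> = madd C (madd C (cmp C b r) (idm C Y)) (mneg C (cmp C b r))"
    using add_assoc[of Y Y "cmp C b r" "idm C Y" "mneg C (cmp C b r)"] Y br by simp
  also have "\<dots> = madd C (madd C (idm C Y) (cmp C b r)) (mneg C (cmp C b r))"
    using add_comm[of Y Y "cmp C b r" "idm C Y"] Y br by simp
  also have "\<dots> = madd C (idm C Y) (madd C (cmp C b r) (mneg C (cmp C b r)))"
    using add_assoc[of Y Y "idm C Y" "cmp C b r" "mneg C (cmp C b r)"] Y br by simp
  also have "\<dots> = idm C Y" using Y br by simp
  finally have sum: "madd C (cmp C b r) (cmp C i2 p) = idm C Y" .
  have "is_biprod C X Z Y"
    unfolding is_biprod_def using X Y dt b r i2 rb pi2id pb ri2 sum by blast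
  thus ?thesis by blast
qed

lemma iso_refl: "X \<in> Ob C \<Longrightarrow> iso C (idm C X) X X"
  unfolding iso_def by (metis id_in id_r)

lemma iso_obj_refl: "X \<in> Ob C \<Longrightarrow> iso_obj C X X"
  unfolding iso_obj_def using iso_refl by blast

lemma sh_in_shift_set: "B' \<subseteq> Ob C \<Longrightarrow> X \<in> B' \<Longrightarrow> shO C X \<in> shift_set C B'"
  unfolding shift_set_def using iso_obj_refl by blast

lemma left_perp: assumes cp: "cotorsion_pair C A B" and X: "X \<in> Ob C"
  and v: "\<forall>Y1\<in>shift_set C B. \<forall>f\<in>Hom C X Y1. f = mzero C X Y1"
  shows "X \<in> A"
proof -
  have "X \<in> ext C A (shift_set C B)" using cp X unfolding cotorsion_pair_def by blast
  then obtain A0 B1 a b c where A0: "A0 \<in> A" and B1: "B1 \<in> shift_set C B"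
    and tr: "(A0, X, B1, a, b, c) \<in> dtri C" unfolding ext_def by blast
  note dt = dtriD[OF tr]
  have "b = mzero C X B1" using v B1 dt by blast
  hence "cmp C b (idm C X) = mzero C X B1" using dt by simp
  then obtain s where s: "s \<in> Hom C X A0" "idm C X = cmp C a s"
    using Ecov[OF tr X id_in[OF X]] by blast
  obtain Z where "is_biprod C X Z A0" using retract[OF X dt(1) s(1) dt(4)] s(2) by metis
  thus ?thesis using cp A0 unfolding cotorsion_pair_def good_subcat_def by blast
qed

lemma right_perp: assumes cp: "cotorsion_pair C A B" and X: "X \<in> Ob C"
  and v: "\<forall>A0\<in>A. \<forall>f\<in>Hom C A0 (shO C X). f = mzero C A0 (shO C X)"
  shows "X \<in> B"
proof -
  have "shO C X \<in> Ob C" using X by simp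
  hence "shO C X \<in> ext C A (shift_set C B)" using cp unfolding cotorsion_pair_def by blast
  then obtain A0 B1 a b c where A0: "A0 \<in> A" and B1: "B1 \<in> shift_set C B"
    and tr: "(A0, shO C X, B1, a, b, c) \<in> dtri C" unfolding ext_def by blast
  note dt = dtriD[OF tr]
  have "a = mzero C A0 (shO C X)" using v A0 dt by blast
  hence "cmp C (idm C (shO C X)) a = mzero C A0 (shO C X)" using dt by simp
  then obtain r where r: "r \<in> Hom C B1 (shO C X)" "idm C (shO C X) = cmp C r b"
    using Econtra[OF tr dt(2) id_in[OF dt(2)]] by blast
  obtain B' where B': "B' \<in> B" "iso_obj C B1 (shO C B')" using B1 unfolding shift_set_def by blast
  have B'o: "B' \<in> Ob C" using B' cp unfolding cotorsion_pair_def good_subcat_def by blast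
  obtain \<psi> \<psi>' where ps: "\<psi> \<in> Hom C B1 (shO C B')" "\<psi>' \<in> Hom C (shO C B') B1"
    "cmp C \<psi>' \<psi> = idm C B1" "cmp C \<psi> \<psi>' = idm C (shO C B')"
    using B'(2) unfolding iso_obj_def iso_def by blast
  have b': "cmp C \<psi> b \<in> Hom C (shO C X) (shO C B')" using ps dt B'o by blast
  have r': "cmp C r \<psi>' \<in> Hom C (shO C B') (shO C X)" using ps r dt B'o by blast
  have "cmp C (cmp C r \<psi>') (cmp C \<psi> b) = cmp C r (cmp C \<psi>' (cmp C \<psi> b))"
    using assoc[of "shO C X" "shO C B'" B1 "shO C X" "cmp C \<psi> b" \<psi>' r] b' ps r dt B'o by simp
  also have "cmp C \<psi>' (cmp C \<psi> b) = b"
    using assoc[of "shO C X" B1 "shO C B'" B1 b \<psi> \<psi>'] ps dt B'o by simp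
  finally have rb': "cmp C (cmp C r \<psi>') (cmp C \<psi> b) = idm C (shO C X)" using r(2) by simp
  obtain b0 where b0: "b0 \<in> Hom C X B'" "cmp C \<psi> b = shM C b0" using shM_surj[OF X B'o b'] by blast
  obtain r0 where r0: "r0 \<in> Hom C B' X" "cmp C r \<psi>' = shM C r0" using shM_surj[OF B'o X r'] by blast
  have "shM C (cmp C r0 b0) = shM C (idm C X)"
    using shM_comp[OF X B'o X b0(1) r0(1)] b0(2) r0(2) rb' X by simp
  hence "cmp C r0 b0 = idm C X" using shM_inj[of X X] X b0 r0 B'o by (meson comp_in id_in)
  then obtain Z where "is_biprod C X Z B'" using retract[OF X B'o b0(1) r0(1)] by metis
  thus ?thesis using cp B' unfolding cotorsion_pair_def good_subcat_def by blast
qed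

lemma unshift_tri: assumes X: "X \<in> Ob C" and Y: "Y \<in> Ob C" and Z: "Z \<in> Ob C"
  and tr: "(shO C X, shO C Y, shO C Z, f', g', h') \<in> dtri C"
  shows "\<exists>f g h. (X, Y, Z, f, g, h) \<in> dtri C"
proof -
  note dt = dtriD[OF tr]
  obtain f0 where f0: "f0 \<in> Hom C X Y" "f' = shM C f0" using shM_surj[OF X Y dt(4)] by blast
  obtain g0 where g0: "g0 \<in> Hom C Y Z" "g' = shM C g0" using shM_surj[OF Y Z dt(5)] by blast
  obtain h0 where h0: "h0 \<in> Hom C Z (shO C X)" "h' = shM C h0" using shM_surj[OF Z shO_in[OF X] dt(6)] by blast
  define f g h where "f = mneg C f0" "g = mneg C g0" "h = mneg C h0"
  have fi: "f \<in> Hom C X Y" "g \<in> Hom C Y Z" "h \<in> Hom C Z (shO C X)"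
    unfolding f_g_h_def using neg_in[OF X Y f0(1)] neg_in[OF Y Z g0(1)] neg_in[OF Z shO_in[OF X] h0(1)] by auto
  have sf0: "shM C f0 \<in> Hom C (shO C X) (shO C Y)" using shM_in[OF X Y f0(1)] .
  have sg0: "shM C g0 \<in> Hom C (shO C Y) (shO C Z)" using shM_in[OF Y Z g0(1)] .
  have sh0: "shM C h0 \<in> Hom C (shO C Z) (shO C (shO C X))" using shM_in[OF Z shO_in[OF X] h0(1)] .
  have sf: "mneg C (shM C f) = f'" unfolding f_g_h_def(1)
    using shM_neg[OF X Y f0(1)] neg_neg[OF shO_in[OF X] shO_in[OF Y] sf0] f0(2) by simp
  have sg: "mneg C (shM C g) = g'" unfolding f_g_h_def(2)
    using shM_neg[OF Y Z g0(1)] neg_neg[OF shO_in[OF Y] shO_in[OF Z] sg0] g0(2) by simp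
  have sh: "mneg C (shM C h) = h'" unfolding f_g_h_def(3)
    using shM_neg[OF Z shO_in[OF X] h0(1)] neg_neg[OF shO_in[OF Z] shO_in[OF shO_in[OF X]] sh0] h0(2) by simp
  have t0: "is_triangle C (X, Y, Z, f, g, h)" unfolding is_triangle_def using X Y Z fi by simp
  have t1: "is_triangle C (Y, Z, shO C X, g, h, mneg C (shM C f))" unfolding is_triangle_def
    using X Y Z fi by (simp add: shM_in)
  have t2: "is_triangle C (Z, shO C X, shO C Y, h, mneg C (shM C f), mneg C (shM C g))" unfolding is_triangle_def
    using X Y Z fi by (simp add: shM_in)
  have "(Z, shO C X, shO C Y, h, mneg C (shM C f), mneg C (shM C g)) \<in> dtri C"
    using TR2[OF t2] tr sf sg sh by simp
  hence "(Y, Z, shO C X, g, h, mneg C (shM C f)) \<in> dtri C" using TR2[OF t1] by simp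
  hence "(X, Y, Z, f, g, h) \<in> dtri C" using TR2[OF t0] by simp
  thus ?thesis by blast
qed

end

theorem lemma2p5:
  fixes C :: "('o, 'm) tricat"
    and S T U V :: "'o set"
  assumes "triangulated C"
    and "twin_cotorsion_pair C S T U V"
  shows "U \<subseteq> ext C (unshift_set C S) (U \<inter> T)
       \<and> T \<subseteq> ext C (U \<inter> T) (shift_set C V)"
proof -
  note tri = assms(1)
  have ST: "cotorsion_pair C S T" and UV: "cotorsion_pair C U V"
    and SV: "hom_vanish C S (shift_set C V)" using assms(2) unfolding twin_cotorsion_pair_def by blast+
  have gs: "good_subcat C S" "good_subcat C T" "good_subcat C U" "good_subcat C V"
    using ST UV unfolding cotorsion_pair_def by simp_all
  have Sob: "S \<subseteq> Ob C" and Tob: "T \<subseteq> Ob C" and Uob: "U \<subseteq> Ob C" and Vob: "V \<subseteq> Ob C"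
    using gs unfolding good_subcat_def by simp_all
  have ST0: "hom_vanish C S (shift_set C T)" and UV0: "hom_vanish C U (shift_set C V)"
    using ST UV unfolding cotorsion_pair_def by simp_all
  have part2: "T \<subseteq> ext C (U \<inter> T) (shift_set C V)"
  proof
    fix T0 assume T0: "T0 \<in> T"
    hence T0o: "T0 \<in> Ob C" using Tob by blast
    hence "T0 \<in> ext C U (shift_set C V)" using UV unfolding cotorsion_pair_def by blast
    then obtain U0 V1 f g h where U0: "U0 \<in> U" and V1: "V1 \<in> shift_set C V"
      and tr: "(U0, T0, V1, f, g, h) \<in> dtri C" unfolding ext_def by blast
    note dt = dtriD[OF tri tr]
    have "U0 \<in> T"
    proof (rule right_perp[OF tri ST dt(1)], intro ballI)
      fix S0 a assume S0: "S0 \<in> S" and a: "a \<in> Hom C S0 (shO C U0)"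
      have S0o: "S0 \<in> Ob C" using S0 Sob by blast
      have R: "(T0, V1, shO C U0, g, h, mneg C (shM C f)) \<in> dtri C" using rot[OF tri tr] .
      have sU: "shO C U0 \<in> Ob C" and sT: "shO C T0 \<in> Ob C" using shO_in[OF tri dt(1)] shO_in[OF tri dt(2)] .
      have mf: "mneg C (shM C f) \<in> Hom C (shO C U0) (shO C T0)"
        using neg_in[OF tri sU sT shM_in[OF tri dt(1) dt(2) dt(4)]] .
      have "cmp C (mneg C (shM C f)) a \<in> Hom C S0 (shO C T0)" using comp_in[OF tri S0o sU sT a mf] .
      moreover have "shO C T0 \<in> shift_set C T" using sh_in_shift_set[OF tri Tob T0] .
      ultimately have "cmp C (mneg C (shM C f)) a = mzero C S0 (shO C T0)"
        using ST0 S0 unfolding hom_vanish_def by blast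
      then obtain a' where a': "a' \<in> Hom C S0 V1" "a = cmp C h a'"
        using Ecov[OF tri rot[OF tri R] S0o a] by blast
      have "a' = mzero C S0 V1" using SV S0 V1 a'(1) unfolding hom_vanish_def by blast
      thus "a = mzero C S0 (shO C U0)" using a'(2) comp_0r[OF tri S0o dt(3) sU dt(6)] by simp
    qed
    thus "T0 \<in> ext C (U \<inter> T) (shift_set C V)" unfolding ext_def using T0o U0 V1 tr by blast
  qed
  have part1: "U \<subseteq> ext C (unshift_set C S) (U \<inter> T)"
  proof
    fix U0 assume U0: "U0 \<in> U"
    hence U0o: "U0 \<in> Ob C" using Uob by blast
    hence sU0: "shO C U0 \<in> Ob C" using tri by simp
    hence "shO C U0 \<in> ext C S (shift_set C T)" using ST unfolding cotorsion_pair_def by blast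
    then obtain S0 T1 a b c where S0: "S0 \<in> S" and T1: "T1 \<in> shift_set C T"
      and tr: "(S0, shO C U0, T1, a, b, c) \<in> dtri C" unfolding ext_def by blast
    note dt = dtriD[OF tri tr]
    obtain T' where T': "T' \<in> T" "iso_obj C T1 (shO C T')" using T1 unfolding shift_set_def by blast
    have T'o: "T' \<in> Ob C" using T' Tob by blast
    obtain \<psi> \<psi>' where ps: "\<psi> \<in> Hom C T1 (shO C T')" "\<psi>' \<in> Hom C (shO C T') T1"
      "cmp C \<psi>' \<psi> = idm C T1" "cmp C \<psi> \<psi>' = idm C (shO C T')"
      using T'(2) unfolding iso_obj_def iso_def by blast
    obtain X where X: "X \<in> Ob C" "iso_obj C S0 (shO C X)" using ess_surj[OF tri dt(1)] by blast
    obtain \<phi> \<phi>' where ph: "\<phi> \<in> Hom C S0 (shO C X)" "\<phi>' \<in> Hom C (shO C X) S0"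
      "cmp C \<phi>' \<phi> = idm C S0" "cmp C \<phi> \<phi>' = idm C (shO C X)"
      using X(2) unfolding iso_obj_def iso_def by blast
    have sX: "shO C X \<in> Ob C" and sT': "shO C T' \<in> Ob C" and ssX: "shO C (shO C X) \<in> Ob C"
      using shO_in[OF tri X(1)] shO_in[OF tri T'o] shO_in[OF tri shO_in[OF tri X(1)]] by auto
    have sph: "shM C \<phi> \<in> Hom C (shO C S0) (shO C (shO C X))" using shM_in[OF tri dt(1) sX ph(1)] .
    define f' g' h' where "f' = cmp C a \<phi>'" "g' = cmp C \<psi> b" "h' = cmp C (shM C \<phi>) (cmp C c \<psi>')"
    have f'i: "f' \<in> Hom C (shO C X) (shO C U0)" using f'_g'_h'_def comp_in[OF tri sX dt(1) dt(2) ph(2) dt(4)] by simp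
    have g'i: "g' \<in> Hom C (shO C U0) (shO C T')" using f'_g'_h'_def comp_in[OF tri dt(2) dt(3) sT' dt(5) ps(1)] by simp
    have sS0: "shO C S0 \<in> Ob C" using shO_in[OF tri dt(1)] .
    have c\<psi>: "cmp C c \<psi>' \<in> Hom C (shO C T') (shO C S0)" using comp_in[OF tri sT' dt(3) sS0 ps(2) dt(6)] .
    have h'i: "h' \<in> Hom C (shO C T') (shO C (shO C X))" using f'_g'_h'_def comp_in[OF tri sT' sS0 ssX c\<psi> sph] by simp
    have istri: "is_triangle C (shO C X, shO C U0, shO C T', f', g', h')" unfolding is_triangle_def
      using sX sU0 sT' f'i g'i h'i by simp
    have isoa: "iso C \<phi> S0 (shO C X)" unfolding iso_def using ph by blast
    have isob: "iso C (idm C (shO C U0)) (shO C U0) (shO C U0)" using iso_refl[OF tri sU0] .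
    have isoc: "iso C \<psi> T1 (shO C T')" unfolding iso_def using ps by blast
    have e1: "cmp C (idm C (shO C U0)) a = cmp C f' \<phi>"
    proof -
      have "cmp C f' \<phi> = cmp C a (cmp C \<phi>' \<phi>)"
        unfolding f'_g'_h'_def using assoc[OF tri dt(1) sX dt(1) dt(2) ph(1) ph(2) dt(4)] by simp
      thus ?thesis using ph(3) id_r[OF tri dt(1) dt(2) dt(4)] id_l[OF tri dt(1) dt(2) dt(4)] by simp
    qed
    have e2: "cmp C \<psi> b = cmp C g' (idm C (shO C U0))"
      unfolding f'_g'_h'_def using id_r[OF tri sU0 sT'] g'i f'_g'_h'_def by simp
    have e3: "cmp C (shM C \<phi>) c = cmp C h' \<psi>"
    proof -
      have "cmp C h' \<psi> = cmp C (shM C \<phi>) (cmp C (cmp C c \<psi>') \<psi>)"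
        unfolding f'_g'_h'_def using assoc[OF tri dt(3) sT' sS0 ssX ps(1) c\<psi> sph] by simp
      also have "cmp C (cmp C c \<psi>') \<psi> = c"
        using assoc[OF tri dt(3) sT' dt(3) sS0 ps(1) ps(2) dt(6)] ps(3) id_r[OF tri dt(3) sS0 dt(6)] by simp
      finally show ?thesis by simp
    qed
    have tr': "(shO C X, shO C U0, shO C T', f', g', h') \<in> dtri C"
      using TR1iso[OF tri tr istri isoa isob isoc e1 e2 e3] .
    obtain f g h where tr2: "(X, U0, T', f, g, h) \<in> dtri C" using unshift_tri[OF tri X(1) U0o T'o tr'] by blast
    note dt2 = dtriD[OF tri tr2]
    have sXS: "shO C X \<in> S" using ST S0 X sX unfolding cotorsion_pair_def good_subcat_def by blast
    have "T' \<in> U"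
    proof (rule left_perp[OF tri UV T'o], intro ballI)
      fix Y1 d assume Y1: "Y1 \<in> shift_set C V" and d: "d \<in> Hom C T' Y1"
      have Y1o: "Y1 \<in> Ob C" using Y1 unfolding shift_set_def by blast
      have "cmp C d g \<in> Hom C U0 Y1" using comp_in[OF tri U0o T'o Y1o dt2(5) d] .
      hence "cmp C d g = mzero C U0 Y1" using UV0 U0 Y1 unfolding hom_vanish_def by blast
      then obtain e where e: "e \<in> Hom C (shO C X) Y1" "d = cmp C e h" using Econtra[OF tri rot[OF tri tr2] Y1o d] by blast
      have "e = mzero C (shO C X) Y1" using SV sXS Y1 e(1) unfolding hom_vanish_def by blast
      thus "d = mzero C T' Y1" using e comp_0l[OF tri T'o sX Y1o dt2(6)] by simp
    qed
    moreover have "X \<in> unshift_set C S" unfolding unshift_set_def using X sXS by blast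
    ultimately show "U0 \<in> ext C (unshift_set C S) (U \<inter> T)" unfolding ext_def using U0o T' tr2 by blast
  qed
  show ?thesis using part1 part2 by blast
qed

end
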